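(* Let $1\le\tau_1<\tau_2<\dots<\tau_m$ be fixed thresholds. Consider instances with two candidates $P,Q$, and any deterministic mechanism which selects a winner using only the threshold information described in the context. Then the worst-case distortion of the mechanism is at least $$\max\Big\{\tau_1,\ \frac{\tau_m+2}{\tau_m},\ \max_{1\le l\le m-1}\frac{\tau_l\tau_{l+1}+2\tau_{l+1}-1}{\tau_l\tau_{l+1}+1}\Big\}.$$ (Equivalently, with the conventions $\tau_0=1/\tau_1$ and $\tau_{m+1}=\infty$, the bound is $\max_{0\le l\le m}\frac{\tau_l\tau_{l+1}+2\tau_{l+1}-1}{\tau_l\tau_{l+1}+1}$, the $l=m$ term being interpreted as its limit $(\tau_m+2)/\tau_m$.)
   Context: Voters $N=\{1,\dots,n\}$ and a finite set of candidates $\mathcal C$ are points of an arbitrary (unknown) metric space $(X,d)$. Voter $i$ prefers $P$ to $Q$ only if $d(i,P)\le d(i,Q)$; the strength of this preference is $\alpha_i^{PQ}=d(i,Q)/d(i,P)\ge1$. $SC(Y)=\sum_{i\in N}d(i,Y)$. Distortion of a winner $P_I$ on instance $I=(N,\mathcal C,d)$ is $SC(P_I)/\min_{Z\in\mathcal C}SC(Z)$; the distortion of a mechanism is the supremum over instances. Threshold information: given thresholds $1\le\tau_1<\dots<\tau_m$ and setting $\tau_{m+1}=\infty$, for each voter $i$ and each pair $P,Q$, if $i$'s preference strength between $P$ and $Q$ is at least $\tau_1$ the mechanism learns which of the two $i$ prefers and the unique $l\in\{1,\dots,m\}$ with $\tau_l\le$ strength $<\tau_{l+1}$; if the strength is below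 $\tau_1$ the mechanism learns nothing about $i$'s preference between $P$ and $Q$. Thus it learns the sets $A_l=\{i: d(i,P)\le d(i,Q),\ \tau_l\le\alpha_i^{PQ}<\tau_{l+1}\}$, $B_l=\{j: d(j,Q)\le d(j,P),\ \tau_l\le\alpha_j^{QP}<\tau_{l+1}\}$, and the set $C$ of remaining voters. *)

theory Defs
  imports Complex_Main "HOL-Library.Extended_Real"
begin

text \<open>Points of an instance: voters 1..n and the two candidates P, Q.
  An instance is a (pseudo)metric on these labels; distinct voters may share a location.\<close>
datatype pt = Voter nat | CandP | CandQ

definition pts :: "nat \<Rightarrow> pt set" where
  "pts n = Voter ` {1..n} \<union> {CandP, CandQ}"

definition is_instance :: "nat \<Rightarrow> (pt \<Rightarrow> pt \<Rightarrow> real) \<Rightarrow> bool" where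
  "is_instance n d \<longleftrightarrow>
     (\<forall>x\<in>pts n. d x x = 0) \<and>
     (\<forall>x\<in>pts n. \<forall>y\<in>pts n. 0 \<le> d x y \<and> d x y = d y x) \<and>
     (\<forall>x\<in>pts n. \<forall>y\<in>pts n. \<forall>z\<in>pts n. d x z \<le> d x y + d y z)"

definition strength :: "real \<Rightarrow> real \<Rightarrow> ereal" where
  "strength a b = (if a = 0 then (if b = 0 then 1 else \<infinity>) else ereal (b / a))"

definition in_level :: "(nat \<Rightarrow> real) \<Rightarrow> nat \<Rightarrow> real \<Rightarrow> real \<Rightarrow> nat \<Rightarrow> bool" where
  "in_level \<tau> m a b l \<longleftrightarrow> a \<le> b \<and> ereal (\<tau> l) \<le> strength a b \<and>
     (if l < m then strength a b < ereal (\<tau> (Suc l)) else True)"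

definition A_set :: "(nat \<Rightarrow> real) \<Rightarrow> nat \<Rightarrow> nat \<Rightarrow> (pt \<Rightarrow> pt \<Rightarrow> real) \<Rightarrow> nat \<Rightarrow> nat set" where
  "A_set \<tau> m n d l = (if l \<in> {1..m} then
     {i\<in>{1..n}. in_level \<tau> m (d (Voter i) CandP) (d (Voter i) CandQ) l} else {})"

definition B_set :: "(nat \<Rightarrow> real) \<Rightarrow> nat \<Rightarrow> nat \<Rightarrow> (pt \<Rightarrow> pt \<Rightarrow> real) \<Rightarrow> nat \<Rightarrow> nat set" where
  "B_set \<tau> m n d l = (if l \<in> {1..m} then
     {i\<in>{1..n}. in_level \<tau> m (d (Voter i) CandQ) (d (Voter i) CandP) l} else {})"

text \<open>The information available to the mechanism: n, the sets A_l and B_l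
  (C is determined as the remaining voters).\<close>
type_synonym info = "nat \<times> (nat \<Rightarrow> nat set) \<times> (nat \<Rightarrow> nat set)"

definition threshold_info :: "(nat \<Rightarrow> real) \<Rightarrow> nat \<Rightarrow> nat \<Rightarrow> (pt \<Rightarrow> pt \<Rightarrow> real) \<Rightarrow> info" where
  "threshold_info \<tau> m n d = (n, A_set \<tau> m n d, B_set \<tau> m n d)"

definition SC :: "nat \<Rightarrow> (pt \<Rightarrow> pt \<Rightarrow> real) \<Rightarrow> pt \<Rightarrow> real" where
  "SC n d Y = (\<Sum>i\<in>{1..n}. d (Voter i) Y)"

definition ratio :: "real \<Rightarrow> real \<Rightarrow> ereal" where
  "ratio x y = (if y = 0 then (if x = 0 then 1 else \<infinity>) else ereal (x / y))"

definition winner :: "bool \<Rightarrow> pt" where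
  "winner b = (if b then CandP else CandQ)"

definition inst_distortion :: "nat \<Rightarrow> (pt \<Rightarrow> pt \<Rightarrow> real) \<Rightarrow> bool \<Rightarrow> ereal" where
  "inst_distortion n d w = ratio (SC n d (winner w)) (min (SC n d CandP) (SC n d CandQ))"

definition mech_distortion :: "(nat \<Rightarrow> real) \<Rightarrow> nat \<Rightarrow> (info \<Rightarrow> bool) \<Rightarrow> ereal" where
  "mech_distortion \<tau> m f =
     (SUP p \<in> {(n, d). is_instance n d}.
        inst_distortion (fst p) (snd p) (f (threshold_info \<tau> m (fst p) (snd p))))"

end

theory Submission
  imports Defs
begin

definition lined :: "(pt \<Rightarrow> real) \<Rightarrow> pt \<Rightarrow> pt \<Rightarrow> real" where
  "lined pos x y = \<bar>pos x - pos y\<bar>"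

lemma lined_inst: "is_instance n (lined pos)"
  unfolding is_instance_def lined_def by auto

definition posf :: "real \<Rightarrow> real \<Rightarrow> pt \<Rightarrow> real" where
  "posf x1 x2 z = (case z of CandP \<Rightarrow> 0 | CandQ \<Rightarrow> 1 | Voter i \<Rightarrow> if i = 1 then x1 else x2)"

lemma posf_simps[simp]: "posf x1 x2 CandP = 0" "posf x1 x2 CandQ = 1"
  "posf x1 x2 (Voter (Suc 0)) = x1" "posf x1 x2 (Voter 2) = x2"
  by (auto simp: posf_def)

lemma SC2: "SC 2 d Y = d (Voter 1) Y + d (Voter 2) Y"
  by (simp add: SC_def numeral_2_eq_2)

lemma SC1: "SC 1 d Y = d (Voter 1) Y"
  by (simp add: SC_def)

lemma dist_le: "is_instance n d \<Longrightarrow>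
   inst_distortion n d (f (threshold_info \<tau> m n d)) \<le> mech_distortion \<tau> m f"
  unfolding mech_distortion_def
  by (rule SUP_upper2[where i="(n,d)"]) auto

lemma pair_bound:
  assumes "is_instance n d1" "is_instance n d2"
    "threshold_info \<tau> m n d1 = threshold_info \<tau> m n d2"
    "r \<le> inst_distortion n d1 True" "r \<le> inst_distortion n d2 False"
  shows "r \<le> mech_distortion \<tau> m f"
proof (cases "f (threshold_info \<tau> m n d1)")
  case True
  then show ?thesis using dist_le[OF assms(1), of f \<tau> m] assms(4) by auto
next
  case False
  then show ?thesis using dist_le[OF assms(2), of f \<tau> m] assms(3,5) by auto
qed

lemma info_eq:
  assumes "\<And>i l. i \<in> {1..n} \<Longrightarrow> l \<in> {1..m} \<Longrightarrow>
     in_level \<tau> m (d (Voter i) CandP) (d (Voter i) CandQ) l = in_level \<tau> m (d' (Voter i) CandP) (d' (Voter i) CandQ) l"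
   "\<And>i l. i \<in> {1..n} \<Longrightarrow> l \<in> {1..m} \<Longrightarrow>
     in_level \<tau> m (d (Voter i) CandQ) (d (Voter i) CandP) l = in_level \<tau> m (d' (Voter i) CandQ) (d' (Voter i) CandP) l"
  shows "threshold_info \<tau> m n d = threshold_info \<tau> m n d'"
proof -
  have A: "A_set \<tau> m n d l = A_set \<tau> m n d' l" for l
  proof (cases "l \<in> {1..m}")
    case True
    then show ?thesis
      unfolding A_set_def using assms(1)[OF _ True] by (simp only: if_True) blast
  next
    case False
    show ?thesis unfolding A_set_def by (rule trans[OF if_not_P[OF False] sym[OF if_not_P[OF False]]])
  qed
  have B: "B_set \<tau> m n d l = B_set \<tau> m n d' l" for l
  proof (cases "l \<in> {1..m}")
    case True
    then show ?thesis
      unfolding B_set_def using assms(2)[OF _ True] by (simp only: if_True) blast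
  next
    case False
    show ?thesis unfolding B_set_def by (rule trans[OF if_not_P[OF False] sym[OF if_not_P[OF False]]])
  qed
  show ?thesis unfolding threshold_info_def using A B by (simp add: fun_eq_iff)
qed

lemma in_level_between:
  assumes "0 < a" "a < b"
  shows "in_level \<tau> m a b l = (\<tau> l \<le> b / a \<and> (l < m \<longrightarrow> b / a < \<tau> (Suc l)))"
    "in_level \<tau> m b a l = False"
  using assms by (auto simp: in_level_def strength_def)

lemma in_level_inf:
  assumes "0 < c"
  shows "in_level \<tau> m 0 c l = (\<not> l < m)" "in_level \<tau> m c 0 l = False"
  using assms by (auto simp: in_level_def strength_def)

lemma ratio_ge: "0 < y \<Longrightarrow> y \<le> x \<Longrightarrow> ratio x (min x y) = ereal (x / y)"
  "0 < y \<Longrightarrow> y \<le> x \<Longrightarrow> ratio x (min y x) = ereal (x / y)"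
  by (auto simp: ratio_def min_def)

lemma lim_bound:
  fixes g :: "real \<Rightarrow> real"
  assumes "(g \<longlongrightarrow> L) (at_right 0)" "0 < \<delta>"
    "\<And>e. 0 < e \<Longrightarrow> e < \<delta> \<Longrightarrow> ereal (g e) \<le> M"
  shows "ereal L \<le> M"
proof (rule tendsto_upperbound)
  show "((\<lambda>e. ereal (g e)) \<longlongrightarrow> ereal L) (at_right 0)"
    using assms(1) by (rule tendsto_ereal)
  show "\<forall>\<^sub>F e in at_right 0. ereal (g e) \<le> M"
    unfolding eventually_at_right_field using assms(2,3) by blast
qed simp

context
  fixes m :: nat and \<tau> :: "nat \<Rightarrow> real"
  assumes m1: "1 \<le> m" and t1: "1 \<le> \<tau> 1" and chain: "\<forall>l\<in>{1..<m}. \<tau> l < \<tau> (Suc l)"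
begin

lemma tmono: assumes "1 \<le> i" "i \<le> j" "j \<le> m" shows "\<tau> i \<le> \<tau> j"
  using assms(2,3)
proof (induction j rule: dec_induct)
  case (step k)
  then have "\<tau> k < \<tau> (Suc k)" using chain assms(1) by auto
  then show ?case using step by auto
qed auto

lemma lvl_iff:
  assumes "l \<in> {1..m}" "l' \<in> {1..m}" "\<tau> l \<le> x" "l < m \<longrightarrow> x < \<tau> (Suc l)"
  shows "(\<tau> l' \<le> x \<and> (l' < m \<longrightarrow> x < \<tau> (Suc l'))) = (l' = l)"
proof
  assume h: "\<tau> l' \<le> x \<and> (l' < m \<longrightarrow> x < \<tau> (Suc l'))"
  show "l' = l"
  proof (rule ccontr)
    assume "l' \<noteq> l"
    then consider "l' < l" | "l < l'" by linarith
    then show False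
    proof cases
      case 1
      then have "\<tau> (Suc l') \<le> \<tau> l" using assms by (intro tmono) auto
      then show ?thesis using h 1 assms by auto
    next
      case 2
      then have "\<tau> (Suc l) \<le> \<tau> l'" using assms by (intro tmono) auto
      then show ?thesis using h 2 assms by auto
    qed
  qed
qed (use assms in auto)

lemma t_ge1: "l \<in> {1..m} \<Longrightarrow> 1 \<le> \<tau> l"
  using tmono[of 1 l] t1 by auto

lemma bound2_s:
  assumes s: "\<tau> m < s"
  shows "ereal ((s + 2) / s) \<le> mech_distortion \<tau> m f"
proof -
  have tm: "1 \<le> \<tau> m" using t_ge1[of m] m1 by auto
  have s1: "1 < s" using s tm by auto
  define d1 where "d1 = lined (posf (1/(1+s)) 1)"
  define d2 where "d2 = lined (posf 0 (s/(1+s)))"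
  have q: "1 - 1/(1+s) = s/(1+s)" "1 - s/(1+s) = 1/(1+s)" using s1 by (auto simp: field_simps)
  have pos: "0 < 1/(1+s)" "0 < s/(1+s)" "1/(1+s) < s/(1+s)" using s1 by (auto simp: field_simps)
  have D1: "d1 (Voter 1) CandP = 1/(1+s)" "d1 (Voter 1) CandQ = s/(1+s)"
    "d1 (Voter 2) CandP = 1" "d1 (Voter 2) CandQ = 0"
    unfolding d1_def lined_def using q pos by auto
  have D2: "d2 (Voter 1) CandP = 0" "d2 (Voter 1) CandQ = 1"
    "d2 (Voter 2) CandP = s/(1+s)" "d2 (Voter 2) CandQ = 1/(1+s)"
    unfolding d2_def lined_def using q pos s1 by auto
  have rs: "(s/(1+s)) / (1/(1+s)) = s" using s1 by (auto simp: field_simps)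
  have lv: "(\<tau> l \<le> s \<and> (l < m \<longrightarrow> s < \<tau> (Suc l))) = (\<not> l < m)" if "l \<in> {1..m}" for l
    using lvl_iff[of m l s] that m1 s by auto
  have info: "threshold_info \<tau> m 2 d1 = threshold_info \<tau> m 2 d2"
  proof (rule info_eq)
    fix i l assume i: "i \<in> {1..2::nat}" and l: "l \<in> {1..m}"
    then have "i = 1 \<or> i = 2" by auto
    then show "in_level \<tau> m (d1 (Voter i) CandP) (d1 (Voter i) CandQ) l =
        in_level \<tau> m (d2 (Voter i) CandP) (d2 (Voter i) CandQ) l"
      "in_level \<tau> m (d1 (Voter i) CandQ) (d1 (Voter i) CandP) l =
        in_level \<tau> m (d2 (Voter i) CandQ) (d2 (Voter i) CandP) l"
      using D1 D2 in_level_between[OF pos(1) pos(3)] in_level_inf[of 1] rs lv[OF l] by auto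
  qed
  have SC: "SC 2 d1 CandP = (s+2)/(1+s)" "SC 2 d1 CandQ = s/(1+s)"
     "SC 2 d2 CandP = s/(1+s)" "SC 2 d2 CandQ = (s+2)/(1+s)"
  proof -
    have ne: "1 + s \<noteq> 0" using s1 by auto
    show "SC 2 d1 CandP = (s+2)/(1+s)" "SC 2 d1 CandQ = s/(1+s)"
     "SC 2 d2 CandP = s/(1+s)" "SC 2 d2 CandQ = (s+2)/(1+s)"
      unfolding SC2 D1 D2 using ne by (simp_all add: add_divide_eq_iff divide_add_eq_iff)
  qed
  have r: "((s+2)/(1+s)) / (s/(1+s)) = (s+2)/s" using s1 by (simp add: divide_simps)
  have le: "s/(1+s) \<le> (s+2)/(1+s)" using s1 by (auto simp: field_simps)
  have e1: "inst_distortion 2 d1 True = ereal ((s + 2) / s)"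
    by (simp only: inst_distortion_def winner_def if_True SC ratio_ge(1)[OF pos(2) le] r)
  have e2: "inst_distortion 2 d2 False = ereal ((s + 2) / s)"
    by (simp only: inst_distortion_def winner_def if_False SC ratio_ge(2)[OF pos(2) le] r)
  show ?thesis
  proof (rule pair_bound[of 2 d1 d2, OF _ _ info])
    show "is_instance 2 d1" unfolding d1_def by (rule lined_inst)
    show "is_instance 2 d2" unfolding d2_def by (rule lined_inst)
  qed (simp_all only: e1 e2 order_refl)
qed

lemma bound1_s:
  assumes s1: "1 < s" and s: "s < \<tau> 1"
  shows "ereal s \<le> mech_distortion \<tau> m f"
proof -
  define d1 where "d1 = lined (posf (s/(1+s)) 0)"
  define d2 where "d2 = lined (posf (1/(1+s)) 0)"
  have q: "1 - 1/(1+s) = s/(1+s)" "1 - s/(1+s) = 1/(1+s)" using s1 by (auto simp: field_simps)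
  have pos: "0 < 1/(1+s)" "0 < s/(1+s)" "1/(1+s) < s/(1+s)" using s1 by (auto simp: field_simps)
  have D1: "d1 (Voter 1) CandP = s/(1+s)" "d1 (Voter 1) CandQ = 1/(1+s)"
    unfolding d1_def lined_def using q pos s1 by auto
  have D2: "d2 (Voter 1) CandP = 1/(1+s)" "d2 (Voter 1) CandQ = s/(1+s)"
    unfolding d2_def lined_def using q pos s1 by auto
  have rs: "(s/(1+s)) / (1/(1+s)) = s" using s1 by (auto simp: field_simps)
  have lv: "\<not> \<tau> l \<le> s" if "l \<in> {1..m}" for l
    using tmono[of 1 l] that s by auto
  have info: "threshold_info \<tau> m 1 d1 = threshold_info \<tau> m 1 d2"
  proof (rule info_eq)
    fix i l assume i: "i \<in> {1..1::nat}" and l: "l \<in> {1..m}"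
    then have "i = 1" by auto
    then show "in_level \<tau> m (d1 (Voter i) CandP) (d1 (Voter i) CandQ) l =
        in_level \<tau> m (d2 (Voter i) CandP) (d2 (Voter i) CandQ) l"
      "in_level \<tau> m (d1 (Voter i) CandQ) (d1 (Voter i) CandP) l =
        in_level \<tau> m (d2 (Voter i) CandQ) (d2 (Voter i) CandP) l"
      using D1 D2 in_level_between[OF pos(1) pos(3)] rs lv[OF l] by auto
  qed
  have SC: "SC 1 d1 CandP = s/(1+s)" "SC 1 d1 CandQ = 1/(1+s)"
     "SC 1 d2 CandP = 1/(1+s)" "SC 1 d2 CandQ = s/(1+s)"
    unfolding SC1 D1 D2 by simp_all
  have le: "1/(1+s) \<le> s/(1+s)" using pos by simp
  have e1: "inst_distortion 1 d1 True = ereal s"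
    by (simp only: inst_distortion_def winner_def if_True SC ratio_ge(1)[OF pos(1) le] rs)
  have e2: "inst_distortion 1 d2 False = ereal s"
    by (simp only: inst_distortion_def winner_def if_False SC ratio_ge(2)[OF pos(1) le] rs)
  show ?thesis
  proof (rule pair_bound[of 1 d1 d2, OF _ _ info])
    show "is_instance 1 d1" unfolding d1_def by (rule lined_inst)
    show "is_instance 1 d2" unfolding d2_def by (rule lined_inst)
  qed (simp_all only: e1 e2 order_refl)
qed

lemma bound3_ts:
  assumes l: "l \<in> {1..<m}" and t: "\<tau> l \<le> t" "t < \<tau> (Suc l)" and s: "\<tau> l \<le> s" "s < \<tau> (Suc l)"
    and t1: "1 < t" and s1: "1 < s"
  shows "ereal ((t*s+2*s-1)/(t*s+1)) \<le> mech_distortion \<tau> m f"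
proof -
  define d1 where "d1 = lined (posf (1/(t+1)) (s/(s-1)))"
  define d2 where "d2 = lined (posf (-1/(s-1)) (t/(t+1)))"
  have q: "1 - 1/(t+1) = t/(t+1)" "1 - t/(t+1) = 1/(t+1)" "s/(s-1) - 1 = 1/(s-1)" "1 + 1/(s-1) = s/(s-1)"
    using s1 t1 by (auto simp: field_simps)
  have pos: "0 < 1/(t+1)" "0 < t/(t+1)" "1/(t+1) < t/(t+1)" "0 < 1/(s-1)" "0 < s/(s-1)" "1/(s-1) < s/(s-1)"
    using s1 t1 by (auto simp: field_simps)
  have D1: "d1 (Voter 1) CandP = 1/(t+1)" "d1 (Voter 1) CandQ = t/(t+1)"
    "d1 (Voter 2) CandP = s/(s-1)" "d1 (Voter 2) CandQ = 1/(s-1)"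
    unfolding d1_def lined_def using q pos s1 t1 by auto
  have D2: "d2 (Voter 1) CandP = 1/(s-1)" "d2 (Voter 1) CandQ = s/(s-1)"
    "d2 (Voter 2) CandP = t/(t+1)" "d2 (Voter 2) CandQ = 1/(t+1)"
    unfolding d2_def lined_def using q pos s1 t1 by (auto simp: abs_minus_commute)
  have rs: "(t/(t+1)) / (1/(t+1)) = t" "(s/(s-1)) / (1/(s-1)) = s" using s1 t1 by (auto simp: field_simps)
  have l': "l \<in> {1..m}" using l by auto
  have lv: "(\<tau> l' \<le> x \<and> (l' < m \<longrightarrow> x < \<tau> (Suc l'))) = (l' = l)"
    if "l' \<in> {1..m}" "\<tau> l \<le> x" "x < \<tau> (Suc l)" for l' x
    using lvl_iff[of l l' x] that l' by auto
  have info: "threshold_info \<tau> m 2 d1 = threshold_info \<tau> m 2 d2"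
  proof (rule info_eq)
    fix i l' assume i: "i \<in> {1..2::nat}" and l: "l' \<in> {1..m}"
    then have "i = 1 \<or> i = 2" by auto
    then show "in_level \<tau> m (d1 (Voter i) CandP) (d1 (Voter i) CandQ) l' =
        in_level \<tau> m (d2 (Voter i) CandP) (d2 (Voter i) CandQ) l'"
      "in_level \<tau> m (d1 (Voter i) CandQ) (d1 (Voter i) CandP) l' =
        in_level \<tau> m (d2 (Voter i) CandQ) (d2 (Voter i) CandP) l'"
      using D1 D2 in_level_between[OF pos(1) pos(3)] in_level_between[OF pos(4) pos(6)] rs
        lv[OF l t] lv[OF l s] by auto
  qed
  define X where "X = 1/(t+1) + s/(s-1)"
  define Y where "Y = t/(t+1) + 1/(s-1)"
  have SC: "SC 2 d1 CandP = X" "SC 2 d1 CandQ = Y"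
     "SC 2 d2 CandP = Y" "SC 2 d2 CandQ = X"
    unfolding SC2 D1 D2 X_def Y_def by simp_all
  have Yp: "0 < Y" unfolding Y_def using pos(2,4) by (rule add_pos_pos)
  have a: "X = (t*s+2*s-1) / ((t+1)*(s-1))" unfolding X_def using t1 s1 by (simp add: field_simps)
  have b: "Y = (t*s+1) / ((t+1)*(s-1))" unfolding Y_def using t1 s1 by (simp add: field_simps)
  have le: "Y \<le> X" unfolding a b using t1 s1 by (intro divide_right_mono) auto
  have r: "X / Y = (t*s+2*s-1)/(t*s+1)"
    unfolding a b using t1 s1 by simp
  have e1: "inst_distortion 2 d1 True = ereal ((t*s+2*s-1)/(t*s+1))"
    by (simp only: inst_distortion_def winner_def if_True SC ratio_ge(1)[OF Yp le] r)
  have e2: "inst_distortion 2 d2 False = ereal ((t*s+2*s-1)/(t*s+1))"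
    by (simp only: inst_distortion_def winner_def if_False SC ratio_ge(2)[OF Yp le] r)
  show ?thesis
  proof (rule pair_bound[of 2 d1 d2, OF _ _ info])
    show "is_instance 2 d1" unfolding d1_def by (rule lined_inst)
    show "is_instance 2 d2" unfolding d2_def by (rule lined_inst)
  qed (simp_all only: e1 e2 order_refl)
qed

lemma B2: "ereal ((\<tau> m + 2) / \<tau> m) \<le> mech_distortion \<tau> m f"
proof -
  have tm: "1 \<le> \<tau> m" using t_ge1[of m] m1 by auto
  have lim0: "((\<lambda>e. (\<tau> m + e + 2) / (\<tau> m + e)) \<longlongrightarrow> (\<tau> m + 0 + 2) / (\<tau> m + 0)) (at_right 0)"
    by (intro tendsto_intros) (use tm in auto)
  have lim: "((\<lambda>e. (\<tau> m + e + 2) / (\<tau> m + e)) \<longlongrightarrow> (\<tau> m + 2) / \<tau> m) (at_right 0)"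
    using lim0 by simp
  show ?thesis
  proof (rule lim_bound[OF lim, of 1])
    fix e :: real assume "0 < e" "e < 1"
    then show "ereal ((\<tau> m + e + 2) / (\<tau> m + e)) \<le> mech_distortion \<tau> m f"
      using bound2_s[of "\<tau> m + e" f] by (simp add: add.commute add.left_commute)
  qed simp
qed

lemma B1: "ereal (\<tau> 1) \<le> mech_distortion \<tau> m f"
proof (cases "\<tau> 1 = 1")
  case True
  have tm: "1 \<le> \<tau> m" using t_ge1[of m] m1 by auto
  then have "1 \<le> (\<tau> m + 2) / \<tau> m" by (simp add: field_simps)
  then show ?thesis using B2[of f] True by (metis ereal_less_eq(3) order_trans)
next
  case False
  then have t1': "1 < \<tau> 1" using t1 by auto
  have lim: "((\<lambda>e. \<tau> 1 - e) \<longlongrightarrow> \<tau> 1) (at_right 0)"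
    by (intro tendsto_eq_intros) auto
  show ?thesis
  proof (rule lim_bound[OF lim, of "\<tau> 1 - 1"])
    fix e :: real assume "0 < e" "e < \<tau> 1 - 1"
    then show "ereal (\<tau> 1 - e) \<le> mech_distortion \<tau> m f"
      by (intro bound1_s) auto
  qed (use t1' in simp)
qed

lemma B3:
  assumes l: "l \<in> {1..<m}"
  shows "ereal ((\<tau> l * \<tau> (Suc l) + 2 * \<tau> (Suc l) - 1) / (\<tau> l * \<tau> (Suc l) + 1)) \<le> mech_distortion \<tau> m f"
proof -
  define a where "a = \<tau> l"
  define b where "b = \<tau> (Suc l)"
  have ab: "a < b" unfolding a_def b_def using chain l by auto
  have a1: "1 \<le> a" unfolding a_def using t_ge1[of l] l by auto
  have lim0: "((\<lambda>e. ((a+e)*(b-e)+2*(b-e)-1)/((a+e)*(b-e)+1)) \<longlongrightarrow>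
       ((a+0)*(b-0)+2*(b-0)-1)/((a+0)*(b-0)+1)) (at_right 0)"
  proof (intro tendsto_intros)
    have "0 < a * b" using a1 ab by simp
    then show "(a + 0) * (b - 0) + 1 \<noteq> 0" by simp
  qed
  have lim: "((\<lambda>e. ((a+e)*(b-e)+2*(b-e)-1)/((a+e)*(b-e)+1)) \<longlongrightarrow>
       (a*b+2*b-1)/(a*b+1)) (at_right 0)"
    using lim0 by simp
  have "ereal ((a*b+2*b-1)/(a*b+1)) \<le> mech_distortion \<tau> m f"
  proof (rule lim_bound[OF lim, of "(b-a)/2"])
    fix e :: real assume e: "0 < e" "e < (b-a)/2"
    show "ereal (((a+e)*(b-e)+2*(b-e)-1)/((a+e)*(b-e)+1)) \<le> mech_distortion \<tau> m f"
      by (rule bound3_ts[OF l]) (use e ab a1 in \<open>auto simp: a_def b_def\<close>)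
  qed (use ab in simp)
  then show ?thesis unfolding a_def b_def .
qed

end

theorem mainTheorem2:
  fixes m :: nat and \<tau> :: "nat \<Rightarrow> real" and f :: "info \<Rightarrow> bool"
  assumes "1 \<le> m"
    and "1 \<le> \<tau> 1"
    and "\<forall>l\<in>{1..<m}. \<tau> l < \<tau> (Suc l)"
  shows "ereal (Max ({\<tau> 1, (\<tau> m + 2) / \<tau> m} \<union>
           (\<lambda>l. (\<tau> l * \<tau> (Suc l) + 2 * \<tau> (Suc l) - 1) / (\<tau> l * \<tau> (Suc l) + 1)) ` {1..<m}))
         \<le> mech_distortion \<tau> m f"
proof -
  let ?S = "{\<tau> 1, (\<tau> m + 2) / \<tau> m} \<union>
           (\<lambda>l. (\<tau> l * \<tau> (Suc l) + 2 * \<tau> (Suc l) - 1) / (\<tau> l * \<tau> (Suc l) + 1)) ` {1..<m}"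
  have all: "\<forall>x\<in>?S. ereal x \<le> mech_distortion \<tau> m f"
    using B1[OF assms, of f] B2[OF assms, of f] B3[OF assms, of _ f] by blast
  have "Max ?S \<in> ?S" by (rule Max_in) auto
  then show ?thesis using all by blast
qed

end
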